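(* Let $N>0$ and $\tau\in(0,1)$. (i) The following are equivalent: $\underline\beta_1(\tau)<4(N+1)$; $4(N+1)-\tau\beta_2^*(\tau)>2(N+1)>\beta_1^{**}(\tau)-\tau\beta_2^*(\tau)$; $\beta_1^{**}(\tau)<4(N+1)$; $\tau\in(0,\tau_0^{(1)})$. Moreover, for every $\tau\in(0,\tau_0^{(1)})$: $$\underline\beta_1(\tau)<4(N+1)=\varphi_2^+(\beta_2^*(\tau)),\quad\text{equivalently}\quad \beta_2^*(\tau)=\varphi_1^+(4(N+1))<\overline\beta_2(\tau),$$ and $\beta_1^{**}(\tau)=\varphi_2^-(\beta_2^*(\tau))<\underline\beta_1(\tau)$. (ii) The following are equivalent: $\underline\beta_2(\tau)<4$; $4-\tau\beta_1^*(\tau)>2>\beta_2^{**}(\tau)-\tau\beta_1^*(\tau)$; $\beta_2^{**}(\tau)<4$; $\tau\in(0,\tau_0^{(2)})$. Moreover, for every $\tau\in(0,\tau_0^{(2)})$: $$\underline\beta_2(\tau)<4=\varphi_1^+(\beta_1^*(\tau)),\quad\text{equivalently}\quad \beta_1^*(\tau)=\varphi_2^+(4)<\overline\beta_1(\tau),$$ and $\beta_2^{**}(\tau)=\varphi_1^-(\beta_1^*(\tau))<\underline\beta_2(\tau)$.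
   Context: With $D=(N+1)^2+2\tau(N+1)+1$: $$\underline\beta_1(\tau)=\tfrac{2}{1-\tau^2}(N+1+\tau+\tau\sqrt D),\qquad \overline\beta_1(\tau)=\tfrac{2}{1-\tau^2}(N+1+\tau+\sqrt D),$$ $$\underline\beta_2(\tau)=\tfrac{2}{1-\tau^2}(1+\tau(N+1)+\tau\sqrt D),\qquad \overline\beta_2(\tau)=\tfrac{2}{1-\tau^2}(1+\tau(N+1)+\sqrt D);$$ $$\beta_1^*(\tau)=4(N+1)+8\tau,\quad \beta_2^*(\tau)=4+8\tau(N+1),\quad \beta_1^{**}(\tau)=8\tau(1+2\tau(N+1)),\quad \beta_2^{**}(\tau)=8\tau(N+1+2\tau);$$ $$\tau_0^{(1)}=\frac{N+1}{1+\sqrt{1+4(N+1)^2}},\qquad \tau_0^{(2)}=\frac{1}{N+1+\sqrt{(N+1)^2+4}};$$ $$\varphi_1^\pm(\beta_1)=2+\tau\beta_1\pm\sqrt{(2+\tau\beta_1)^2-\beta_1(\beta_1-4(N+1))}\quad (0<\beta_1\le\overline\beta_1(\tau)),$$ $$\varphi_2^\pm(\beta_2)=2(N+1)+\tau\beta_2\pm\sqrt{(2(N+1)+\tau\beta_2)^2-\beta_2(\beta_2-4)}\quad (0<\beta_2\le\overline\beta_2(\tau)).$$ *)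

theory Defs
  imports Complex_Main
begin

definition DD :: "nat \<Rightarrow> real \<Rightarrow> real" where
  "DD N t = (real N + 1)^2 + 2 * t * (real N + 1) + 1"

definition beta1_lo :: "nat \<Rightarrow> real \<Rightarrow> real" where
  "beta1_lo N t = 2 / (1 - t^2) * (real N + 1 + t + t * sqrt (DD N t))"
definition beta1_hi :: "nat \<Rightarrow> real \<Rightarrow> real" where
  "beta1_hi N t = 2 / (1 - t^2) * (real N + 1 + t + sqrt (DD N t))"
definition beta2_lo :: "nat \<Rightarrow> real \<Rightarrow> real" where
  "beta2_lo N t = 2 / (1 - t^2) * (1 + t * (real N + 1) + t * sqrt (DD N t))"
definition beta2_hi :: "nat \<Rightarrow> real \<Rightarrow> real" where
  "beta2_hi N t = 2 / (1 - t^2) * (1 + t * (real N + 1) + sqrt (DD N t))"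

definition beta1_star :: "nat \<Rightarrow> real \<Rightarrow> real" where
  "beta1_star N t = 4 * (real N + 1) + 8 * t"
definition beta2_star :: "nat \<Rightarrow> real \<Rightarrow> real" where
  "beta2_star N t = 4 + 8 * t * (real N + 1)"
definition beta1_sstar :: "nat \<Rightarrow> real \<Rightarrow> real" where
  "beta1_sstar N t = 8 * t * (1 + 2 * t * (real N + 1))"
definition beta2_sstar :: "nat \<Rightarrow> real \<Rightarrow> real" where
  "beta2_sstar N t = 8 * t * (real N + 1 + 2 * t)"

definition tau0_1 :: "nat \<Rightarrow> real" where
  "tau0_1 N = (real N + 1) / (1 + sqrt (1 + 4 * (real N + 1)^2))"
definition tau0_2 :: "nat \<Rightarrow> real" where
  "tau0_2 N = 1 / (real N + 1 + sqrt ((real N + 1)^2 + 4))"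

text \<open>phi functions (meaningful for 0 < b <= the corresponding upper beta).\<close>
definition phi1_plus :: "nat \<Rightarrow> real \<Rightarrow> real \<Rightarrow> real" where
  "phi1_plus N t b = 2 + t * b + sqrt ((2 + t * b)^2 - b * (b - 4 * (real N + 1)))"
definition phi1_minus :: "nat \<Rightarrow> real \<Rightarrow> real \<Rightarrow> real" where
  "phi1_minus N t b = 2 + t * b - sqrt ((2 + t * b)^2 - b * (b - 4 * (real N + 1)))"
definition phi2_plus :: "nat \<Rightarrow> real \<Rightarrow> real \<Rightarrow> real" where
  "phi2_plus N t b = 2 * (real N + 1) + t * b + sqrt ((2 * (real N + 1) + t * b)^2 - b * (b - 4))"
definition phi2_minus :: "nat \<Rightarrow> real \<Rightarrow> real \<Rightarrow> real" where
  "phi2_minus N t b = 2 * (real N + 1) + t * b - sqrt ((2 * (real N + 1) + t * b)^2 - b * (b - 4))"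

end

theory Submission imports Defs begin

lemma key:
  fixes x y c g p :: real
  assumes "0 \<le> y" "x^2 - y^2 = c*g" "c>0" "x = g + p" "p > 0"
  shows "y < x \<longleftrightarrow> g > 0"
proof
  assume "y < x"
  then have "y^2 < x^2" using assms(1) by (simp add: power_strict_mono)
  then have "c*g > 0" using assms(2) by linarith
  then show "g > 0" using assms(3) by (simp add: zero_less_mult_iff)
next
  assume g: "g > 0"
  then have "c*g > 0" using assms(3) by simp
  then have "y^2 < x^2" using assms(2) by linarith
  moreover have "0 \<le> x" using g assms(4,5) by linarith
  ultimately show "y < x" by (rule power_less_imp_less_base)
qed

lemma lo1:
  fixes m t :: real
  assumes m: "m > 0" and t: "0 < t" "t < 1"
  shows "2/(1-t^2)*(m+t+t*sqrt(m^2+2*t*m+1)) < 4*m \<longleftrightarrow> m - 2*t - 4*m*t^2 > 0"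
proof -
  define D where "D = m^2+2*t*m+1"
  have D: "D > 0" unfolding D_def using m t by (simp add: add_pos_pos)
  have c: "0 < 1 - t^2" using t by (simp add: power_less_one_iff abs_square_less_1)
  have "2/(1-t^2)*(m+t+t*sqrt D) < 4*m \<longleftrightarrow> 2*(m+t+t*sqrt D) < 4*m*(1-t^2)"
    using c by (simp add: field_simps)
  also have "\<dots> \<longleftrightarrow> t*sqrt D < m - t - 2*m*t^2" by (simp add: algebra_simps, linarith)
  also have "\<dots> \<longleftrightarrow> m - 2*t - 4*m*t^2 > 0"
  proof (rule key[where c = "m*(1-t^2)" and p = "t + 2*m*t^2"])
    show "0 \<le> t * sqrt D" using t D by simp
    have "(t*sqrt D)^2 = t^2*D" using D by (simp add: power_mult_distrib)
    then show "(m - t - 2*m*t^2)^2 - (t*sqrt D)^2 = m*(1-t^2)*(m - 2*t - 4*m*t^2)"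
      unfolding D_def by (simp add: power2_eq_square algebra_simps)
    show "0 < m*(1-t^2)" using m c by simp
    show "m - t - 2*m*t^2 = (m - 2*t - 4*m*t^2) + (t + 2*m*t^2)" by simp
    show "0 < t + 2*m*t^2" using m t by (simp add: add_pos_pos)
  qed
  finally show ?thesis unfolding D_def .
qed

lemma lo2:
  fixes m t :: real
  assumes m: "m > 0" and t: "0 < t" "t < 1"
  shows "2/(1-t^2)*(1+t*m+t*sqrt(m^2+2*t*m+1)) < 4 \<longleftrightarrow> 1 - 2*t*m - 4*t^2 > 0"
proof -
  define D where "D = m^2+2*t*m+1"
  have D: "D > 0" unfolding D_def using m t by (simp add: add_pos_pos)
  have c: "0 < 1 - t^2" using t by (simp add: power_less_one_iff abs_square_less_1)
  have "2/(1-t^2)*(1+t*m+t*sqrt D) < 4 \<longleftrightarrow> 2*(1+t*m+t*sqrt D) < 4*(1-t^2)"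
    using c by (simp add: field_simps)
  also have "\<dots> \<longleftrightarrow> t*sqrt D < 1 - t*m - 2*t^2" by (simp add: algebra_simps, linarith)
  also have "\<dots> \<longleftrightarrow> 1 - 2*t*m - 4*t^2 > 0"
  proof (rule key[where c = "1-t^2" and p = "t*m + 2*t^2"])
    show "0 \<le> t * sqrt D" using t D by simp
    have "(t*sqrt D)^2 = t^2*D" using D by (simp add: power_mult_distrib)
    then show "(1 - t*m - 2*t^2)^2 - (t*sqrt D)^2 = (1-t^2)*(1 - 2*t*m - 4*t^2)"
      unfolding D_def by (simp add: power2_eq_square algebra_simps)
    show "0 < 1-t^2" using c by simp
    show "1 - t*m - 2*t^2 = (1 - 2*t*m - 4*t^2) + (t*m + 2*t^2)" by simp
    show "0 < t*m + 2*t^2" using m t by (simp add: add_pos_pos)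
  qed
  finally show ?thesis unfolding D_def .
qed

lemma tau1:
  fixes m t :: real
  assumes m: "m > 0" and t: "0 < t"
  shows "t < m / (1 + sqrt (1 + 4 * m^2)) \<longleftrightarrow> m - 2*t - 4*m*t^2 > 0"
proof -
  define s where "s = sqrt (1 + 4*m^2)"
  have s0: "s \<ge> 0" unfolding s_def by simp
  have ss: "s^2 = 1 + 4*m^2" unfolding s_def by (simp add: add_nonneg_nonneg)
  have "t < m / (1 + s) \<longleftrightarrow> t*(1+s) < m" using s0 by (simp add: pos_less_divide_eq)
  also have "\<dots> \<longleftrightarrow> t*s < m - t" by (simp add: algebra_simps)
  also have "\<dots> \<longleftrightarrow> m - 2*t - 4*m*t^2 > 0"
  proof (rule key[where c = "m" and p = "t + 4*m*t^2"])
    show "0 \<le> t * s" using t s0 by simp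
    have "(t*s)^2 = t^2*(1 + 4*m^2)" using ss by (simp add: power_mult_distrib)
    then show "(m - t)^2 - (t*s)^2 = m*(m - 2*t - 4*m*t^2)"
      by (simp add: power2_eq_square algebra_simps)
    show "0 < m" using m .
    show "m - t = (m - 2*t - 4*m*t^2) + (t + 4*m*t^2)" by simp
    show "0 < t + 4*m*t^2" using m t by (simp add: add_pos_pos)
  qed
  finally show ?thesis unfolding s_def .
qed

lemma tau2:
  fixes m t :: real
  assumes m: "m > 0" and t: "0 < t"
  shows "t < 1 / (m + sqrt (m^2 + 4)) \<longleftrightarrow> 1 - 2*t*m - 4*t^2 > 0"
proof -
  define s where "s = sqrt (m^2 + 4)"
  have s0: "s \<ge> 0" unfolding s_def by simp
  have ss: "s^2 = m^2 + 4" unfolding s_def by (simp add: add_nonneg_nonneg)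
  have "t < 1 / (m + s) \<longleftrightarrow> t*(m+s) < 1" using s0 m by (simp add: pos_less_divide_eq)
  also have "\<dots> \<longleftrightarrow> t*s < 1 - t*m" by (simp add: algebra_simps)
  also have "\<dots> \<longleftrightarrow> 1 - 2*t*m - 4*t^2 > 0"
  proof (rule key[where c = "1" and p = "t*m + 4*t^2"])
    show "0 \<le> t * s" using t s0 by simp
    have "(t*s)^2 = t^2*(m^2 + 4)" using ss by (simp add: power_mult_distrib)
    then show "(1 - t*m)^2 - (t*s)^2 = 1*(1 - 2*t*m - 4*t^2)"
      by (simp add: power2_eq_square algebra_simps)
    show "0 < (1::real)" by simp
    show "1 - t*m = (1 - 2*t*m - 4*t^2) + (t*m + 4*t^2)" by simp
    show "0 < t*m + 4*t^2" using m t by (simp add: add_pos_pos)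
  qed
  finally show ?thesis unfolding s_def .
qed

lemma sqrt_sq_eq: "(0::real) \<le> x \<Longrightarrow> y = x^2 \<Longrightarrow> sqrt y = x"
  by simp

lemma mor1:
  fixes m t :: real
  assumes m: "m > 0" and t: "0 < t" "t < 1" and g: "m - 2*t - 4*m*t^2 > 0"
  shows "0 < 4 + 8*t*m"
    and "4 + 8*t*m < 2/(1-t^2)*(1 + t*m + sqrt(m^2+2*t*m+1))"
    and "2*m + t*(4+8*t*m) + sqrt((2*m + t*(4+8*t*m))^2 - (4+8*t*m)*((4+8*t*m) - 4)) = 4*m"
    and "4*m \<le> 2/(1-t^2)*(m + t + sqrt(m^2+2*t*m+1))"
    and "4+8*t*m = 2 + t*(4*m) + sqrt((2 + t*(4*m))^2 - (4*m)*(4*m - 4*m))"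
    and "8*t*(1+2*t*m) = 2*m + t*(4+8*t*m) - sqrt((2*m + t*(4+8*t*m))^2 - (4+8*t*m)*((4+8*t*m) - 4))"
    and "8*t*(1+2*t*m) < 2/(1-t^2)*(m+t+t*sqrt(m^2+2*t*m+1))"
proof -
  define D where "D = m^2+2*t*m+1"
  define gg where "gg = m - 2*t - 4*m*t^2"
  have D: "D > 0" unfolding D_def using m t by (simp add: add_pos_pos)
  have c: "0 < 1 - t^2" using t by (simp add: power_less_one_iff abs_square_less_1)
  have gp: "gg > 0" using g unfolding gg_def .
  show "0 < 4 + 8*t*m" using m t by (simp add: add_pos_pos)
  have "(1 + 3*t*m - 2*t^2 - 4*m*t^3)^2 < D"
  proof -
    have "D - (1 + 3*t*m - 2*t^2 - 4*m*t^3)^2 = gg^2*(1-t^2)"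
      unfolding D_def gg_def by (simp add: power2_eq_square power3_eq_cube algebra_simps)
    moreover have "gg^2*(1-t^2) > 0" using gp c by simp
    ultimately show ?thesis by linarith
  qed
  then have "1 + 3*t*m - 2*t^2 - 4*m*t^3 < sqrt D" by (rule real_less_rsqrt)
  then have "(4 + 8*t*m)*(1-t^2) < 2*(1 + t*m + sqrt D)" by (simp add: algebra_simps power3_eq_cube power2_eq_square)
  then show "4 + 8*t*m < 2/(1-t^2)*(1 + t*m + sqrt(m^2+2*t*m+1))"
    using c unfolding D_def[symmetric] by (simp add: field_simps)
  have e1: "sqrt((2*m + t*(4+8*t*m))^2 - (4+8*t*m)*((4+8*t*m) - 4)) = 2*m - t*(4+8*t*m)"
  proof (rule sqrt_sq_eq)
    show "0 \<le> 2*m - t*(4+8*t*m)" using gp unfolding gg_def by (simp add: algebra_simps power2_eq_square)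
    show "(2*m + t*(4+8*t*m))^2 - (4+8*t*m)*((4+8*t*m) - 4) = (2*m - t*(4+8*t*m))^2"
      by (simp add: power2_eq_square algebra_simps)
  qed
  show "2*m + t*(4+8*t*m) + sqrt((2*m + t*(4+8*t*m))^2 - (4+8*t*m)*((4+8*t*m) - 4)) = 4*m"
    unfolding e1 by simp
  show "8*t*(1+2*t*m) = 2*m + t*(4+8*t*m) - sqrt((2*m + t*(4+8*t*m))^2 - (4+8*t*m)*((4+8*t*m) - 4))"
    unfolding e1 by (simp add: algebra_simps)
  have e2: "sqrt((2 + t*(4*m))^2 - (4*m)*(4*m - 4*m)) = 2 + t*(4*m)"
    using m t by simp
  show "4+8*t*m = 2 + t*(4*m) + sqrt((2 + t*(4*m))^2 - (4*m)*(4*m - 4*m))"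
    unfolding e2 by simp
  have "(m - t - 2*m*t^2)^2 < D"
  proof -
    have "D - (m - t - 2*m*t^2)^2 = (1-t^2)*(1+2*t*m)^2"
      unfolding D_def by (simp add: power2_eq_square algebra_simps)
    moreover have "(1-t^2)*(1+2*t*m)^2 > 0" proof - have "1 + 2*t*m > 0" using m t by (simp add: add_pos_pos) then show ?thesis using c by simp qed
    ultimately show ?thesis by linarith
  qed
  then have "m - t - 2*m*t^2 < sqrt D" by (rule real_less_rsqrt)
  then have "4*m*(1-t^2) \<le> 2*(m + t + sqrt D)" by (simp add: algebra_simps power2_eq_square)
  then show "4*m \<le> 2/(1-t^2)*(m + t + sqrt(m^2+2*t*m+1))"
    using c unfolding D_def[symmetric] by (simp add: field_simps)
  define Lh where "Lh = 4*t*(1+2*t*m)*(1-t^2) - m - t"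
  have "Lh < t * sqrt D"
  proof (cases "Lh \<le> 0")
    case True
    then show ?thesis using t D by (smt (verit) mult_pos_pos real_sqrt_gt_zero)
  next
    case False
    have id: "t^2*D - Lh^2 = gg*(1-t^2)*(Lh + t + 2*m*t^2 + 2*gg*t^2)"
      unfolding D_def gg_def Lh_def by (simp add: power2_eq_square algebra_simps)
    have "Lh + t + 2*m*t^2 + 2*gg*t^2 > 0" using False t m gp by (simp add: add_pos_pos)
    then have "gg*(1-t^2)*(Lh + t + 2*m*t^2 + 2*gg*t^2) > 0" using gp c by simp
    moreover have "(t*sqrt D)^2 = t^2*D" using D by (simp add: power_mult_distrib)
    ultimately have "Lh^2 < (t*sqrt D)^2" using id by linarith
    then show ?thesis by (rule power_less_imp_less_base) (use t D in simp)
  qed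
  then have "8*t*(1+2*t*m)*(1-t^2) < 2*(m+t+t*sqrt D)" unfolding Lh_def by simp
  then show "8*t*(1+2*t*m) < 2/(1-t^2)*(m+t+t*sqrt(m^2+2*t*m+1))"
    using c unfolding D_def[symmetric] by (simp add: field_simps)
qed

lemma mor2:
  fixes m t :: real
  assumes m: "m > 0" and t: "0 < t" "t < 1" and g: "1 - 2*t*m - 4*t^2 > 0"
  shows "0 < 4*m + 8*t"
    and "4*m + 8*t < 2/(1-t^2)*(m + t + sqrt(m^2+2*t*m+1))"
    and "2 + t*(4*m+8*t) + sqrt((2 + t*(4*m+8*t))^2 - (4*m+8*t)*((4*m+8*t) - 4*m)) = 4"
    and "4 \<le> 2/(1-t^2)*(1 + t*m + sqrt(m^2+2*t*m+1))"
    and "4*m+8*t = 2*m + t*4 + sqrt((2*m + t*4)^2 - 4*(4 - 4))"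
    and "8*t*(m+2*t) = 2 + t*(4*m+8*t) - sqrt((2 + t*(4*m+8*t))^2 - (4*m+8*t)*((4*m+8*t) - 4*m))"
    and "8*t*(m+2*t) < 2/(1-t^2)*(1+t*m+t*sqrt(m^2+2*t*m+1))"
proof -
  define D where "D = m^2+2*t*m+1"
  define gg where "gg = 1 - 2*t*m - 4*t^2"
  have D: "D > 0" unfolding D_def using m t by (simp add: add_pos_pos)
  have c: "0 < 1 - t^2" using t by (simp add: power_less_one_iff abs_square_less_1)
  have gp: "gg > 0" using g unfolding gg_def .
  show "0 < 4*m + 8*t" using m t by (simp add: add_pos_pos)
  have "(m + 3*t - 2*m*t^2 - 4*t^3)^2 < D"
  proof -
    have "D - (m + 3*t - 2*m*t^2 - 4*t^3)^2 = gg^2*(1-t^2)"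
      unfolding D_def gg_def by (simp add: power2_eq_square power3_eq_cube algebra_simps)
    moreover have "gg^2*(1-t^2) > 0" using gp c by simp
    ultimately show ?thesis by linarith
  qed
  then have "m + 3*t - 2*m*t^2 - 4*t^3 < sqrt D" by (rule real_less_rsqrt)
  then have "(4*m + 8*t)*(1-t^2) < 2*(m + t + sqrt D)" by (simp add: algebra_simps power3_eq_cube power2_eq_square)
  then show "4*m + 8*t < 2/(1-t^2)*(m + t + sqrt(m^2+2*t*m+1))"
    using c unfolding D_def[symmetric] by (simp add: field_simps)
  have e1: "sqrt((2 + t*(4*m+8*t))^2 - (4*m+8*t)*((4*m+8*t) - 4*m)) = 2 - t*(4*m+8*t)"
  proof (rule sqrt_sq_eq)
    show "0 \<le> 2 - t*(4*m+8*t)" using gp unfolding gg_def by (simp add: algebra_simps power2_eq_square)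
    show "(2 + t*(4*m+8*t))^2 - (4*m+8*t)*((4*m+8*t) - 4*m) = (2 - t*(4*m+8*t))^2"
      by (simp add: power2_eq_square algebra_simps)
  qed
  show "2 + t*(4*m+8*t) + sqrt((2 + t*(4*m+8*t))^2 - (4*m+8*t)*((4*m+8*t) - 4*m)) = 4"
    unfolding e1 by simp
  show "8*t*(m+2*t) = 2 + t*(4*m+8*t) - sqrt((2 + t*(4*m+8*t))^2 - (4*m+8*t)*((4*m+8*t) - 4*m))"
    unfolding e1 by (simp add: algebra_simps)
  have e2: "sqrt((2*m + t*4)^2 - 4*(4 - 4)) = 2*m + t*4"
    using m t by simp
  show "4*m+8*t = 2*m + t*4 + sqrt((2*m + t*4)^2 - 4*(4 - 4))"
    unfolding e2 by simp
  have "(1 - t*m - 2*t^2)^2 < D"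
  proof -
    have "D - (1 - t*m - 2*t^2)^2 = (1-t^2)*(m+2*t)^2"
      unfolding D_def by (simp add: power2_eq_square algebra_simps)
    moreover have "(1-t^2)*(m+2*t)^2 > 0"
    proof - have "m+2*t > 0" using m t by (simp add: add_pos_pos) then show ?thesis using c by simp qed
    ultimately show ?thesis by linarith
  qed
  then have "1 - t*m - 2*t^2 < sqrt D" by (rule real_less_rsqrt)
  then have "4*(1-t^2) \<le> 2*(1 + t*m + sqrt D)" by (simp add: algebra_simps power2_eq_square)
  then show "4 \<le> 2/(1-t^2)*(1 + t*m + sqrt(m^2+2*t*m+1))"
    using c unfolding D_def[symmetric] by (simp add: field_simps)
  define Lh where "Lh = 4*t*(m+2*t)*(1-t^2) - 1 - t*m"
  have "Lh < t * sqrt D"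
  proof (cases "Lh \<le> 0")
    case True
    then show ?thesis using t D by (smt (verit) mult_pos_pos real_sqrt_gt_zero)
  next
    case False
    have id: "t^2*D - Lh^2 = gg*(1-t^2)*(Lh + t*m + 2*t^2 + 2*gg*t^2)"
      unfolding D_def gg_def Lh_def by (simp add: power2_eq_square algebra_simps)
    have "Lh + t*m + 2*t^2 + 2*gg*t^2 > 0" using False t m gp by (simp add: add_pos_pos)
    then have "gg*(1-t^2)*(Lh + t*m + 2*t^2 + 2*gg*t^2) > 0" using gp c by simp
    moreover have "(t*sqrt D)^2 = t^2*D" using D by (simp add: power_mult_distrib)
    ultimately have "Lh^2 < (t*sqrt D)^2" using id by linarith
    then show ?thesis by (rule power_less_imp_less_base) (use t D in simp)
  qed
  then have "8*t*(m+2*t)*(1-t^2) < 2*(1+t*m+t*sqrt D)" unfolding Lh_def by simp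
  then show "8*t*(m+2*t) < 2/(1-t^2)*(1+t*m+t*sqrt(m^2+2*t*m+1))"
    using c unfolding D_def[symmetric] by (simp add: field_simps)
qed

lemma ss1: fixes m t :: real shows "8*t*(1+2*t*m) < 4*m \<longleftrightarrow> m - 2*t - 4*m*t^2 > 0"
  by (simp add: algebra_simps power2_eq_square, linarith)
lemma mid1: fixes m t :: real shows
  "(4*m - t*(4 + 8*t*m) > 2*m \<and> 2*m > 8*t*(1+2*t*m) - t*(4+8*t*m)) \<longleftrightarrow> m - 2*t - 4*m*t^2 > 0"
  by (simp add: algebra_simps power2_eq_square, linarith)
lemma ss2: fixes m t :: real shows "8*t*(m+2*t) < 4 \<longleftrightarrow> 1 - 2*t*m - 4*t^2 > 0"
  by (simp add: algebra_simps power2_eq_square, linarith)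
lemma mid2: fixes m t :: real shows
  "(4 - t*(4*m+8*t) > 2 \<and> 2 > 8*t*(m+2*t) - t*(4*m+8*t)) \<longleftrightarrow> 1 - 2*t*m - 4*t^2 > 0"
  by (simp add: algebra_simps power2_eq_square, linarith)

theorem mainTheorem15:
  fixes N :: nat and t :: real
  assumes "N > 0" and "0 < t" and "t < 1"
  shows
   "((beta1_lo N t < 4 * (real N + 1)
       \<longleftrightarrow> (4 * (real N + 1) - t * beta2_star N t > 2 * (real N + 1)
            \<and> 2 * (real N + 1) > beta1_sstar N t - t * beta2_star N t))
     \<and> (beta1_lo N t < 4 * (real N + 1) \<longleftrightarrow> beta1_sstar N t < 4 * (real N + 1))
     \<and> (beta1_lo N t < 4 * (real N + 1) \<longleftrightarrow> t < tau0_1 N))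
    \<and> (t < tau0_1 N \<longrightarrow>
         beta1_lo N t < 4 * (real N + 1)
       \<and> 0 < beta2_star N t \<and> beta2_star N t \<le> beta2_hi N t
       \<and> phi2_plus N t (beta2_star N t) = 4 * (real N + 1)
       \<and> 4 * (real N + 1) \<le> beta1_hi N t
       \<and> beta2_star N t = phi1_plus N t (4 * (real N + 1))
       \<and> beta2_star N t < beta2_hi N t
       \<and> beta1_sstar N t = phi2_minus N t (beta2_star N t)
       \<and> beta1_sstar N t < beta1_lo N t)
    \<and> ((beta2_lo N t < 4
       \<longleftrightarrow> (4 - t * beta1_star N t > 2 \<and> 2 > beta2_sstar N t - t * beta1_star N t))
     \<and> (beta2_lo N t < 4 \<longleftrightarrow> beta2_sstar N t < 4)
     \<and> (beta2_lo N t < 4 \<longleftrightarrow> t < tau0_2 N))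
    \<and> (t < tau0_2 N \<longrightarrow>
         beta2_lo N t < 4
       \<and> 0 < beta1_star N t \<and> beta1_star N t \<le> beta1_hi N t
       \<and> phi1_plus N t (beta1_star N t) = 4
       \<and> 4 \<le> beta2_hi N t
       \<and> beta1_star N t = phi2_plus N t 4
       \<and> beta1_star N t < beta1_hi N t
       \<and> beta2_sstar N t = phi1_minus N t (beta1_star N t)
       \<and> beta2_sstar N t < beta2_lo N t)"
proof -
  have m: "real N + 1 > 0" by simp
  note F = lo1[OF m assms(2,3)] lo2[OF m assms(2,3)] tau1[OF m assms(2)] tau2[OF m assms(2)]
    ss1[of t "real N + 1"] mid1[of "real N + 1" t] ss2[of t "real N + 1"] mid2[of t "real N + 1"]
    mor1[OF m assms(2,3)] mor2[OF m assms(2,3)]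
  show ?thesis
    unfolding DD_def beta1_lo_def beta1_hi_def beta2_lo_def beta2_hi_def beta1_star_def
      beta2_star_def beta1_sstar_def beta2_sstar_def tau0_1_def tau0_2_def phi1_plus_def
      phi1_minus_def phi2_plus_def phi2_minus_def
    using F by (smt (verit))
qed

end
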